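(* Let $k\ge3$, $2\le s\le k$, $\mathbf n=(n_1,\dots,n_k)$, $r\le\min\{n_1,\dots,n_s\}$. If $\mathcal A\in P_s(\mathbf n,r)$ has a decomposition $\mathcal A=\sum_{i=1}^r\sigma_i\mathbf a^{(1)}_i\otimes\cdots\otimes\mathbf a^{(k)}_i$ with all $\mathbf a^{(l)}_i$ unit vectors and $\mathbf a^{(l)}_1,\dots,\mathbf a^{(l)}_r$ pairwise orthogonal for each $l\le s$, then $\operatorname{rank}(\mathcal A)=\#\{i:\sigma_i\ne0\}$, and a partially orthogonal rank decomposition of $\mathcal A$ is a rank decomposition.
   Context: $P_s(\mathbf n,r)$ is the set of tensors admitting a decomposition as in the claim. The (CP) rank of a tensor is the least number of rank-one tensors summing to it; a rank decomposition is one with that many terms. A partially orthogonal rank decomposition of $\mathcal A$ is a decomposition of the form in the claim (unit factors, orthonormal factors in the first $s$ modes) with the smallest possible number of terms. *)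

theory Defs
  imports Complex_Main
begin

text \<open>Order-k real tensors of size n 0 x ... x n (k-1) (modes indexed 0..k-1).
  A tensor is a function from index tuples (idx :: nat => nat) to reals; only its
  values on valid index tuples (idx l < n l for l < k) matter.
  A vector of mode l is a function nat => real whose entries j < n l matter.\<close>

definition valid_idx :: "nat \<Rightarrow> (nat \<Rightarrow> nat) \<Rightarrow> (nat \<Rightarrow> nat) \<Rightarrow> bool" where
  "valid_idx k n idx \<longleftrightarrow> (\<forall>l<k. idx l < n l)"

definition tensor_eq :: "nat \<Rightarrow> (nat \<Rightarrow> nat) \<Rightarrow> ((nat \<Rightarrow> nat) \<Rightarrow> real) \<Rightarrow> ((nat \<Rightarrow> nat) \<Rightarrow> real) \<Rightarrow> bool" where
  "tensor_eq k n A B \<longleftrightarrow> (\<forall>idx. valid_idx k n idx \<longrightarrow> A idx = B idx)"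

definition outer :: "nat \<Rightarrow> (nat \<Rightarrow> nat \<Rightarrow> real) \<Rightarrow> (nat \<Rightarrow> nat) \<Rightarrow> real" where
  "outer k a = (\<lambda>idx. \<Prod>l<k. a l (idx l))"

definition inner_vec :: "nat \<Rightarrow> (nat \<Rightarrow> real) \<Rightarrow> (nat \<Rightarrow> real) \<Rightarrow> real" where
  "inner_vec m u v = (\<Sum>j<m. u j * v j)"

definition unit_vec :: "nat \<Rightarrow> (nat \<Rightarrow> real) \<Rightarrow> bool" where
  "unit_vec m u \<longleftrightarrow> inner_vec m u u = 1"

definition is_decomp :: "nat \<Rightarrow> (nat \<Rightarrow> nat) \<Rightarrow> ((nat \<Rightarrow> nat) \<Rightarrow> real) \<Rightarrow> nat
    \<Rightarrow> (nat \<Rightarrow> nat \<Rightarrow> nat \<Rightarrow> real) \<Rightarrow> bool" where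
  "is_decomp k n A r a \<longleftrightarrow> tensor_eq k n A (\<lambda>idx. \<Sum>i<r. outer k (a i) idx)"

definition tensor_rank :: "nat \<Rightarrow> (nat \<Rightarrow> nat) \<Rightarrow> ((nat \<Rightarrow> nat) \<Rightarrow> real) \<Rightarrow> nat" where
  "tensor_rank k n A = (LEAST r. \<exists>a. is_decomp k n A r a)"

definition po_decomp :: "nat \<Rightarrow> (nat \<Rightarrow> nat) \<Rightarrow> nat \<Rightarrow> ((nat \<Rightarrow> nat) \<Rightarrow> real) \<Rightarrow> nat
    \<Rightarrow> (nat \<Rightarrow> real) \<Rightarrow> (nat \<Rightarrow> nat \<Rightarrow> nat \<Rightarrow> real) \<Rightarrow> bool" where
  "po_decomp k n s A r \<sigma> a \<longleftrightarrow>
     tensor_eq k n A (\<lambda>idx. \<Sum>i<r. \<sigma> i * outer k (a i) idx) \<and>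
     (\<forall>i<r. \<forall>l<k. unit_vec (n l) (a i l)) \<and>
     (\<forall>l<s. \<forall>i<r. \<forall>j<r. i \<noteq> j \<longrightarrow> inner_vec (n l) (a i l) (a j l) = 0)"

definition P_s :: "nat \<Rightarrow> (nat \<Rightarrow> nat) \<Rightarrow> nat \<Rightarrow> nat \<Rightarrow> ((nat \<Rightarrow> nat) \<Rightarrow> real) set" where
  "P_s k n s r = {A. \<exists>\<sigma> a. po_decomp k n s A r \<sigma> a}"

definition po_rank :: "nat \<Rightarrow> (nat \<Rightarrow> nat) \<Rightarrow> nat \<Rightarrow> ((nat \<Rightarrow> nat) \<Rightarrow> real) \<Rightarrow> nat" where
  "po_rank k n s A = (LEAST r. \<exists>\<sigma> a. po_decomp k n s A r \<sigma> a)"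

end

theory Submission imports Defs "HOL-Library.Function_Algebras" begin

definition sc :: "real \<Rightarrow> ((nat \<Rightarrow> nat) \<Rightarrow> real) \<Rightarrow> (nat \<Rightarrow> nat) \<Rightarrow> real" where
  "sc c f = (\<lambda>x. c * f x)"

lemma vs_sc: "vector_space sc"
  by unfold_locales (auto simp: sc_def fun_eq_iff algebra_simps)

lemma sum_app: "finite I \<Longrightarrow> (\<Sum>i\<in>I. F i) x = (\<Sum>i\<in>I. F i x)"
  by (induct rule: finite_induct) auto

lemma contract:
  assumes "m \<notin> L" "finite L" "finite I"
  shows "(\<Sum>t<N. v t * (\<Sum>i\<in>I. \<gamma> i * (\<Prod>l\<in>insert m L. c i l ((idx(m:=t)) l))))
       = (\<Sum>i\<in>I. \<gamma> i * inner_vec N v (c i m) * (\<Prod>l\<in>L. c i l (idx l)))"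
proof -
  have p: "(\<Prod>l\<in>insert m L. c i l ((idx(m:=t)) l)) = c i m t * (\<Prod>l\<in>L. c i l (idx l))" for i t
  proof -
    have "(\<Prod>l\<in>L. c i l ((idx(m:=t)) l)) = (\<Prod>l\<in>L. c i l (idx l))"
      using assms(1) by (intro prod.cong) auto
    then show ?thesis using assms by simp
  qed
  have "(\<Sum>t<N. v t * (\<Sum>i\<in>I. \<gamma> i * (\<Prod>l\<in>insert m L. c i l ((idx(m:=t)) l))))
     = (\<Sum>t<N. \<Sum>i\<in>I. \<gamma> i * (v t * c i m t) * (\<Prod>l\<in>L. c i l (idx l)))"
    unfolding p by (simp add: sum_distrib_left algebra_simps)
  also have "\<dots> = (\<Sum>i\<in>I. \<Sum>t<N. \<gamma> i * (v t * c i m t) * (\<Prod>l\<in>L. c i l (idx l)))"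
    by (rule sum.swap)
  also have "\<dots> = (\<Sum>i\<in>I. \<gamma> i * inner_vec N v (c i m) * (\<Prod>l\<in>L. c i l (idx l)))"
    by (simp add: inner_vec_def sum_distrib_left sum_distrib_right algebra_simps)
  finally show ?thesis .
qed

lemma unit_nz:
  assumes "unit_vec N u" shows "\<exists>t<N. u t \<noteq> 0"
proof (rule ccontr)
  assume "\<not> ?thesis"
  then have "inner_vec N u u = 0" by (auto simp: inner_vec_def)
  then show False using assms by (simp add: unit_vec_def)
qed

interpretation fv: vector_space sc by (rule vs_sc)

lemma lower:
  assumes k2: "2 \<le> k" and s2: "2 \<le> s" and sk: "s \<le> k"
    and po: "po_decomp k n s A r \<sigma> a" and dec: "is_decomp k n A r' b"
  shows "card {i. i < r \<and> \<sigma> i \<noteq> 0} \<le> r'"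
proof -
  define vr where "vr idx \<longleftrightarrow> (\<forall>l\<in>{1..<k}. idx l < n l)" for idx :: "nat \<Rightarrow> nat"
  define P where "P c idx = (\<Prod>l\<in>{1..<k}. c l (idx l))" for c :: "nat \<Rightarrow> nat \<Rightarrow> real" and idx :: "nat \<Rightarrow> nat"
  define w where "w i = (\<lambda>idx. if vr idx then P (b i) idx else 0)" for i
  define u where "u j = (\<lambda>idx. if vr idx then \<sigma> j * P (a j) idx else 0)" for j
  define S where "S = {i. i < r \<and> \<sigma> i \<noteq> 0}"
  have finS: "finite S" unfolding S_def by auto
  from po have eqA: "tensor_eq k n A (\<lambda>idx. \<Sum>i<r. \<sigma> i * outer k (a i) idx)"
    and unit: "\<forall>i<r. \<forall>l<k. unit_vec (n l) (a i l)"
    and orth: "\<forall>l<s. \<forall>i<r. \<forall>j<r. i \<noteq> j \<longrightarrow> inner_vec (n l) (a i l) (a j l) = 0"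
    unfolding po_decomp_def by auto
  have inn: "inner_vec (n l) (a j l) (a i l) = (if i = j then 1 else 0)"
    if "i < r" "j < r" "l < s" for i j l
    using that unit orth sk unfolding unit_vec_def by auto
  have k0: "{..<k} = insert 0 {1..<k}" using k2 by auto
  have k1: "{1..<k} = insert 1 {2..<k}" using k2 by auto
  have valid: "valid_idx k n (idx(0:=t))" if "vr idx" "t < n 0" for idx t
    using that unfolding vr_def valid_idx_def by (auto simp: not_less)
  have ua: "(\<Sum>t<n 0. a j 0 t * A (idx(0:=t))) = u j idx" if "vr idx" "j < r" for j idx
  proof -
    have "(\<Sum>t<n 0. a j 0 t * A (idx(0:=t))) =
       (\<Sum>t<n 0. a j 0 t * (\<Sum>i<r. \<sigma> i * (\<Prod>l\<in>insert 0 {1..<k}. a i l ((idx(0:=t)) l))))"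
      using eqA valid[OF that(1)] unfolding tensor_eq_def outer_def k0[symmetric]
      by (intro sum.cong) auto
    also have "\<dots> = (\<Sum>i<r. \<sigma> i * inner_vec (n 0) (a j 0) (a i 0) * P (a i) idx)"
      unfolding P_def by (rule contract) auto
    also have "\<dots> = (\<Sum>i<r. if i = j then \<sigma> j * P (a j) idx else 0)"
      using that s2 by (intro sum.cong) (auto simp: inn)
    also have "\<dots> = u j idx" using that by (simp add: u_def)
    finally show ?thesis .
  qed
  have ub: "(\<Sum>t<n 0. a j 0 t * A (idx(0:=t))) = (\<Sum>i<r'. inner_vec (n 0) (a j 0) (b i 0) * P (b i) idx)"
    if "vr idx" for j idx
  proof -
    have "(\<Sum>t<n 0. a j 0 t * A (idx(0:=t))) =
       (\<Sum>t<n 0. a j 0 t * (\<Sum>i<r'. 1 * (\<Prod>l\<in>insert 0 {1..<k}. b i l ((idx(0:=t)) l))))"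
      using dec valid[OF that(1)] unfolding is_decomp_def tensor_eq_def outer_def k0[symmetric]
      by (intro sum.cong) auto
    also have "\<dots> = (\<Sum>i<r'. 1 * inner_vec (n 0) (a j 0) (b i 0) * P (b i) idx)"
      unfolding P_def by (rule contract) auto
    finally show ?thesis by simp
  qed
  have uspan: "u j = (\<Sum>i<r'. sc (inner_vec (n 0) (a j 0) (b i 0)) (w i))" if "j < r" for j
  proof
    fix idx
    show "u j idx = (\<Sum>i<r'. sc (inner_vec (n 0) (a j 0) (b i 0)) (w i)) idx"
      unfolding sum_app[OF finite_lessThan]
      using ua[OF _ that, of idx] ub[of idx j]
      by (cases "vr idx") (auto simp: sc_def w_def u_def)
  qed
  have usub: "u ` S \<subseteq> fv.span (w ` {..<r'})"
  proof
    fix x assume "x \<in> u ` S"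
    then obtain j where j: "j < r" "x = u j" unfolding S_def by auto
    show "x \<in> fv.span (w ` {..<r'})"
      unfolding j(2) uspan[OF j(1)]
      by (intro fv.span_sum fv.span_scale fv.span_base) auto
  qed
  have K: "f j0 = 0" if sum0: "(\<Sum>j\<in>S. sc (f j) (u j)) = 0" and j0: "j0 \<in> S" for f j0
  proof -
    have j0r: "j0 < r" and sj0: "\<sigma> j0 \<noteq> 0" using j0 unfolding S_def by auto
    have "\<forall>l. \<exists>t. l < k \<longrightarrow> t < n l \<and> a j0 l t \<noteq> 0"
      using unit_nz unit j0r by blast
    then obtain tt where tt: "\<And>l. l < k \<Longrightarrow> tt l < n l \<and> a j0 l (tt l) \<noteq> 0" by metis
    have pt: "(\<Sum>j\<in>S. f j * \<sigma> j * (\<Prod>l\<in>insert 1 {2..<k}. a j l ((tt(1:=t)) l))) = 0"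
      if "t < n 1" for t
    proof -
      have v: "vr (tt(1:=t))" using that tt unfolding vr_def by auto
      have "(\<Sum>j\<in>S. sc (f j) (u j)) (tt(1:=t)) = 0" using sum0 by simp
      then have "(\<Sum>j\<in>S. f j * (\<sigma> j * P (a j) (tt(1:=t)))) = 0"
        unfolding sum_app[OF finS] using v by (simp add: sc_def u_def)
      moreover have "(\<Sum>j\<in>S. f j * \<sigma> j * (\<Prod>l\<in>insert 1 {2..<k}. a j l ((tt(1:=t)) l)))
         = (\<Sum>j\<in>S. f j * (\<sigma> j * P (a j) (tt(1:=t))))"
        unfolding P_def k1 by (simp add: mult.assoc)
      ultimately show ?thesis by simp
    qed
    have "0 = (\<Sum>t<n 1. a j0 1 t * (\<Sum>j\<in>S. f j * \<sigma> j * (\<Prod>l\<in>insert 1 {2..<k}. a j l ((tt(1:=t)) l))))"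
      using pt by simp
    also have "\<dots> = (\<Sum>j\<in>S. f j * \<sigma> j * inner_vec (n 1) (a j0 1) (a j 1) * (\<Prod>l\<in>{2..<k}. a j l (tt l)))"
      by (rule contract) (auto simp: finS)
    also have "\<dots> = (\<Sum>j\<in>S. if j = j0 then f j0 * \<sigma> j0 * (\<Prod>l\<in>{2..<k}. a j0 l (tt l)) else 0)"
      using j0r s2 by (intro sum.cong) (auto simp: inn S_def)
    also have "\<dots> = f j0 * \<sigma> j0 * (\<Prod>l\<in>{2..<k}. a j0 l (tt l))"
      using j0 finS by simp
    finally have "f j0 * \<sigma> j0 * (\<Prod>l\<in>{2..<k}. a j0 l (tt l)) = 0" by simp
    moreover have "(\<Prod>l\<in>{2..<k}. a j0 l (tt l)) \<noteq> 0"
      using tt by (auto simp: prod_zero_iff)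
    ultimately show ?thesis using sj0 by simp
  qed
  have inj: "inj_on u S"
  proof
    fix j1 j2 assume j: "j1 \<in> S" "j2 \<in> S" "u j1 = u j2"
    show "j1 = j2"
    proof (rule ccontr)
      assume ne: "j1 \<noteq> j2"
      define f where "f j = (if j = j1 then 1 else if j = j2 then -1 else (0::real))" for j
      have "(\<Sum>j\<in>S. sc (f j) (u j)) = 0"
      proof
        fix x
        have "(\<Sum>j\<in>S. sc (f j) (u j)) x = (\<Sum>j\<in>S. (if j = j1 then u j x else 0) - (if j = j2 then u j x else 0))"
          unfolding sum_app[OF finS] using ne by (intro sum.cong) (auto simp: sc_def f_def)
        also have "\<dots> = 0" unfolding sum_subtractf using j finS by simp
        finally show "(\<Sum>j\<in>S. sc (f j) (u j)) x = 0 x" by simp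
      qed
      from K[OF this j(1)] show False by (simp add: f_def)
    qed
  qed
  have ind: "fv.independent (u ` S)"
  proof (rule fv.independent_if_scalars_zero)
    show "finite (u ` S)" using finS by simp
  next
    fix g x assume s: "(\<Sum>x\<in>u ` S. sc (g x) x) = 0" and x: "x \<in> u ` S"
    then obtain j where j: "j \<in> S" "x = u j" by auto
    have "(\<Sum>j\<in>S. sc (g (u j)) (u j)) = 0" using s by (simp add: sum.reindex[OF inj])
    from K[OF this j(1)] show "g x = 0" using j by simp
  qed
  have "card (u ` S) \<le> card (w ` {..<r'})"
    using fv.independent_span_bound[OF _ ind usub] by simp
  also have "\<dots> \<le> r'" using card_image_le[of "{..<r'}" w] by simp
  finally show ?thesis using card_image[OF inj] unfolding S_def by simp
qed

lemma prune:
  assumes po: "po_decomp k n s A r \<sigma> a"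
  shows "\<exists>\<sigma>2 a2. po_decomp k n s A (card {i. i < r \<and> \<sigma> i \<noteq> 0}) \<sigma>2 a2"
proof -
  define S where "S = {i. i < r \<and> \<sigma> i \<noteq> 0}"
  have finS: "finite S" unfolding S_def by auto
  obtain h where h: "bij_betw h {..<card S} S"
    using ex_bij_betw_nat_finite[OF finS] atLeast0LessThan by metis
  have hr: "i < card S \<Longrightarrow> h i < r" for i using h unfolding bij_betw_def S_def by auto
  have hinj: "i < card S \<Longrightarrow> j < card S \<Longrightarrow> i \<noteq> j \<Longrightarrow> h i \<noteq> h j" for i j
    using h unfolding bij_betw_def inj_on_def by auto
  from po have eqA: "tensor_eq k n A (\<lambda>idx. \<Sum>i<r. \<sigma> i * outer k (a i) idx)"
    and unit: "\<forall>i<r. \<forall>l<k. unit_vec (n l) (a i l)"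
    and orth: "\<forall>l<s. \<forall>i<r. \<forall>j<r. i \<noteq> j \<longrightarrow> inner_vec (n l) (a i l) (a j l) = 0"
    unfolding po_decomp_def by auto
  have sums: "(\<Sum>i<card S. \<sigma> (h i) * outer k (a (h i)) idx) = (\<Sum>i<r. \<sigma> i * outer k (a i) idx)" for idx
  proof -
    have "(\<Sum>i<card S. \<sigma> (h i) * outer k (a (h i)) idx) = (\<Sum>j\<in>S. \<sigma> j * outer k (a j) idx)"
      by (rule sum.reindex_bij_betw[OF h])
    also have "\<dots> = (\<Sum>i<r. \<sigma> i * outer k (a i) idx)"
      by (rule sum.mono_neutral_left) (auto simp: S_def)
    finally show ?thesis .
  qed
  have "po_decomp k n s A (card S) (\<sigma> \<circ> h) (a \<circ> h)"
    unfolding po_decomp_def using eqA unit orth hr hinj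
    by (auto simp: sums tensor_eq_def)
  then show ?thesis unfolding S_def by blast
qed

lemma fold:
  assumes po: "po_decomp k n s A r \<sigma> a" and k1: "1 \<le> k"
  shows "is_decomp k n A r (\<lambda>i l j. if l = 0 then \<sigma> i * a i l j else a i l j)"
proof -
  have k0: "{..<k} = insert 0 {1..<k}" using k1 by auto
  have "outer k (\<lambda>l j. if l = 0 then \<sigma> i * a i l j else a i l j) idx = \<sigma> i * outer k (a i) idx" for i idx
  proof -
    have "(\<Prod>l\<in>{1..<k}. (if l = 0 then \<sigma> i * a i l (idx l) else a i l (idx l))) = (\<Prod>l\<in>{1..<k}. a i l (idx l))"
      by (intro prod.cong) auto
    then show ?thesis unfolding outer_def k0 by simp
  qed
  then show ?thesis using po unfolding po_decomp_def is_decomp_def by simp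
qed

lemma core:
  assumes k2: "2 \<le> k" and s2: "2 \<le> s" and sk: "s \<le> k"
    and po: "po_decomp k n s A r \<sigma> a"
  shows "tensor_rank k n A = card {i. i < r \<and> \<sigma> i \<noteq> 0}"
proof -
  obtain \<sigma>2 a2 where p2: "po_decomp k n s A (card {i. i < r \<and> \<sigma> i \<noteq> 0}) \<sigma>2 a2"
    using prune[OF po] by blast
  show ?thesis unfolding tensor_rank_def
  proof (rule Least_equality)
    show "\<exists>b. is_decomp k n A (card {i. i < r \<and> \<sigma> i \<noteq> 0}) b"
      using fold[OF p2] k2 by auto
  next
    fix y assume "\<exists>b. is_decomp k n A y b"
    then obtain b where "is_decomp k n A y b" by blast
    from lower[OF k2 s2 sk po this] show "card {i. i < r \<and> \<sigma> i \<noteq> 0} \<le> y" .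
  qed
qed

theorem proposition3p3:
  fixes k s r :: nat and n :: "nat \<Rightarrow> nat" and A :: "(nat \<Rightarrow> nat) \<Rightarrow> real"
    and \<sigma> :: "nat \<Rightarrow> real" and a :: "nat \<Rightarrow> nat \<Rightarrow> nat \<Rightarrow> real"
  assumes "k \<ge> 3" and "2 \<le> s" and "s \<le> k"
    and "\<forall>l<s. r \<le> n l"
    and "A \<in> P_s k n s r"
    and "po_decomp k n s A r \<sigma> a"
  shows "tensor_rank k n A = card {i. i < r \<and> \<sigma> i \<noteq> 0}
     \<and> (\<forall>r' \<sigma>' a'. po_decomp k n s A r' \<sigma>' a' \<and> r' = po_rank k n s A \<longrightarrow>
          is_decomp k n A r' (\<lambda>i l j. if l = 0 then \<sigma>' i * a' i l j else a' i l j)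
          \<and> r' = tensor_rank k n A)"
proof (intro conjI allI impI)
  have k2: "2 \<le> k" using assms(1) by simp
  show "tensor_rank k n A = card {i. i < r \<and> \<sigma> i \<noteq> 0}"
    by (rule core[OF k2 assms(2,3,6)])
  fix r' \<sigma>' a' assume h: "po_decomp k n s A r' \<sigma>' a' \<and> r' = po_rank k n s A"
  show "is_decomp k n A r' (\<lambda>i l j. if l = 0 then \<sigma>' i * a' i l j else a' i l j)"
    using fold[of k n s A r' \<sigma>' a'] h k2 by auto
  have tr: "tensor_rank k n A = card {i. i < r' \<and> \<sigma>' i \<noteq> 0}"
    using core[OF k2 assms(2,3)] h by blast
  have le1: "card {i. i < r' \<and> \<sigma>' i \<noteq> 0} \<le> r'"
    using card_mono[of "{..<r'}" "{i. i < r' \<and> \<sigma>' i \<noteq> 0}"] by auto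
  obtain \<sigma>2 a2 where p2: "po_decomp k n s A (card {i. i < r' \<and> \<sigma>' i \<noteq> 0}) \<sigma>2 a2"
    using prune h by blast
  have "po_rank k n s A \<le> card {i. i < r' \<and> \<sigma>' i \<noteq> 0}"
    unfolding po_rank_def by (rule Least_le) (use p2 in blast)
  then show "r' = tensor_rank k n A" using tr le1 h by simp
qed

end
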